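(* Let $n\ge1$ and $0\le k\le n$. There exists a nonempty finite multiset $\{\mathcal{B}_1,\dots,\mathcal{B}_s\}$ of quadratic monomial bases of $Z_k$ which is $X$-balanced, i.e. such that, counting each monomial $x_ax_b$ in each $\mathcal{B}_\ell$ with the exponents of its variables and summing over $\ell=1,\dots,s$, every variable $x_0,\dots,x_n$ occurs the same total number of times.
   Context: Let $x_i:=z^i$ for $0\le i\le n$, and $Z_k:=\operatorname{span}\{z^i: k\le i\le 2n-k\}\subset\mathbb{C}[z]$. A quadratic monomial basis of $Z_k$ is a set of monomials $x_ax_b$ ($0\le a\le b\le n$) whose images $z^{a+b}$ form a basis of $Z_k$, i.e. the map $x_ax_b\mapsto a+b$ is a bijection from the set onto $\{k,k+1,\dots,2n-k\}$. *)

theory Defs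
  imports Main "HOL-Library.Multiset"
begin

text \<open>A monomial x_a x_b (0 <= a <= b <= n) is encoded as the pair (a,b) with a <= b.
  Its image in C[z] is z^(a+b).\<close>

definition quad_mon_basis :: "nat \<Rightarrow> nat \<Rightarrow> (nat \<times> nat) set \<Rightarrow> bool" where
  "quad_mon_basis n k B \<longleftrightarrow>
     (\<forall>(a, b) \<in> B. a \<le> b \<and> b \<le> n) \<and>
     bij_betw (\<lambda>(a, b). a + b) B {k..2 * n - k}"

definition var_occ :: "nat \<Rightarrow> nat \<times> nat \<Rightarrow> nat" where
  "var_occ i p = (if fst p = i then 1 else 0) + (if snd p = i then 1 else 0)"

definition total_occ :: "nat \<Rightarrow> (nat \<times> nat) set multiset \<Rightarrow> nat" where
  "total_occ i M = (\<Sum>B\<in>#M. \<Sum>p\<in>B. var_occ i p)"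

definition X_balanced :: "nat \<Rightarrow> (nat \<times> nat) set multiset \<Rightarrow> bool" where
  "X_balanced n M \<longleftrightarrow> (\<forall>i\<le>n. \<forall>j\<le>n. total_occ i M = total_occ j M)"

end

theory Submission
  imports Defs
begin

definition sort2 :: "nat \<times> nat \<Rightarrow> nat \<times> nat" where
  "sort2 p = (min (fst p) (snd p), max (fst p) (snd p))"

lemma var_occ_sort2[simp]: "var_occ i (sort2 p) = var_occ i p"
  unfolding var_occ_def sort2_def by (cases p) (auto simp: min_def max_def)

lemma var_occ_le: "var_occ i (a,b) = (if a = i then 1 else 0) + (if b = i then 1 else 0)"
  by (simp add: var_occ_def)

lemma qmb_image:
  assumes H: "\<And>d. d \<in> {k..2*n-k} \<Longrightarrow> fst (f d) \<le> snd (f d) \<and> snd (f d) \<le> n \<and> fst (f d) + snd (f d) = d"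
  shows "quad_mon_basis n k (f ` {k..2*n-k})"
    and "(\<Sum>p\<in>f ` {k..2*n-k}. var_occ i p) = (\<Sum>d\<in>{k..2*n-k}. var_occ i (f d))"
proof -
  have inj: "inj_on f {k..2*n-k}"
  proof (rule inj_onI)
    fix x y assume "x \<in> {k..2*n-k}" "y \<in> {k..2*n-k}" "f x = f y"
    then show "x = y" using H[of x] H[of y] by metis
  qed
  show "(\<Sum>p\<in>f ` {k..2*n-k}. var_occ i p) = (\<Sum>d\<in>{k..2*n-k}. var_occ i (f d))"
    using sum.reindex[OF inj] by simp
  have img: "(\<lambda>(a, b). a + b) ` f ` {k..2*n-k} = {k..2*n-k}"
  proof -
    have "(\<lambda>(a, b). a + b) ` f ` {k..2*n-k} = (\<lambda>d. d) ` {k..2*n-k}"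
      unfolding image_image
      by (rule image_cong) (use H in \<open>auto simp: case_prod_beta\<close>)
    then show ?thesis by simp
  qed
  have injs: "inj_on (\<lambda>(a, b). a + b) (f ` {k..2*n-k})"
  proof (rule inj_onI)
    fix x y assume "x \<in> f ` {k..2*n-k}" "y \<in> f ` {k..2*n-k}" and e: "(\<lambda>(a, b). a + b) x = (\<lambda>(a, b). a + b) y"
    then obtain dx dy where dx: "dx \<in> {k..2*n-k}" "x = f dx" and dy: "dy \<in> {k..2*n-k}" "y = f dy" by auto
    then have "dx = dy" using e H[OF dx(1)] H[OF dy(1)] by (simp add: case_prod_beta)
    then show "x = y" using dx dy by simp
  qed
  show "quad_mon_basis n k (f ` {k..2*n-k})"
    unfolding quad_mon_basis_def bij_betw_def
    using injs img H by (auto simp: case_prod_beta)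
qed

definition Su :: "nat \<Rightarrow> nat \<Rightarrow> nat \<Rightarrow> nat \<times> nat" where
  "Su n j d = (if d \<le> n then (j, d - j) else (d - n + j, n - j))"

definition cS :: "nat \<Rightarrow> nat \<Rightarrow> nat \<Rightarrow> nat \<Rightarrow> nat" where
  "cS n k j i = (n - k + 1) * (if j = i then 1 else 0) + (if k \<le> i + j \<and> i + j \<le> n then 1 else 0)
     + (if j < i \<and> i \<le> j + (n - k) then 1 else 0) + (n - k) * (if i + j = n then 1 else 0)"

lemma count_S:
  assumes "j \<le> k" "k \<le> n"
  shows "(\<Sum>d\<in>{k..2*n-k}. var_occ i (Su n j d)) = cS n k j i"
proof -
  have split: "{k..2*n-k} = {k..n} \<union> {Suc n..2*n-k}" using assms by auto
  have disj: "{k..n} \<inter> {Suc n..2*n-k} = {}" by auto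
  have s1: "(\<Sum>d\<in>{k..n}. var_occ i (Su n j d))
      = (\<Sum>d\<in>{k..n}. (if j = i then 1 else 0) + (if d = i + j then 1 else 0))"
    by (rule sum.cong) (use assms in \<open>auto simp: Su_def var_occ_def\<close>)
  have s1': "\<dots> = (n + 1 - k) * (if j = i then 1 else 0) + (if k \<le> i + j \<and> i + j \<le> n then 1 else 0)"
    by (simp add: sum.distrib)
  have s2: "(\<Sum>d\<in>{Suc n..2*n-k}. var_occ i (Su n j d))
      = (\<Sum>d\<in>{Suc n..2*n-k}. (if j < i \<and> d = n + (i - j) then 1 else 0) + (if i + j = n then 1 else 0))"
    by (rule sum.cong) (use assms in \<open>auto simp: Su_def var_occ_def\<close>)
  have s2': "\<dots> = (if j < i \<and> i \<le> j + (n - k) then 1 else 0) + (n - k) * (if i + j = n then 1 else 0)"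
  proof -
    have a: "(\<Sum>d\<in>{Suc n..2*n-k}. (if j < i \<and> d = n + (i - j) then 1 else 0::nat))
          = (if j < i \<and> i \<le> j + (n - k) then 1 else 0)"
    proof (cases "j < i")
      case True
      then have "(\<Sum>d\<in>{Suc n..2*n-k}. (if j < i \<and> d = n + (i - j) then 1 else 0::nat))
          = (\<Sum>d\<in>{Suc n..2*n-k}. (if d = n + (i - j) then 1 else 0::nat))" by simp
      also have "\<dots> = (if n + (i - j) \<in> {Suc n..2*n-k} then 1 else 0)" by (simp add: sum.delta')
      finally show ?thesis using True assms by auto
    qed simp
    have b: "(\<Sum>d\<in>{Suc n..2*n-k}. (if i + j = n then 1 else 0::nat)) = (n - k) * (if i + j = n then 1 else 0)"
      using assms by simp
    show ?thesis by (simp add: sum.distrib a b)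
  qed
  show ?thesis
    unfolding split sum.union_disjoint[OF finite_atLeastAtMost finite_atLeastAtMost disj]
    using s1 s1' s2 s2' assms by (simp add: cS_def Suc_diff_le)
qed

definition Dm :: "nat \<Rightarrow> nat \<Rightarrow> nat \<times> nat" where
  "Dm k d = ((d - k) div 2, d - (d - k) div 2)"

definition cD :: "nat \<Rightarrow> nat \<Rightarrow> nat \<Rightarrow> nat" where
  "cD n k i = (if i \<le> n - k then 1 else 0) + (if i < n - k then 1 else 0)
     + (if k \<le> i then 1 else 0) + (if k < i then 1 else 0)"

lemma count_D_aux:
  "(\<Sum>e\<in>{0..2*m}. var_occ i (e div 2, e + k - e div 2)) =
     (if i \<le> m then 1 else 0) + (if i < m then 1 else 0)
     + (if k \<le> i \<and> i \<le> k + m then 1 else 0) + (if k < i \<and> i \<le> k + m then 1 else 0)"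
proof (induction m)
  case 0
  then show ?case by (auto simp: var_occ_def)
next
  case (Suc m)
  have e: "2 * Suc m = Suc (Suc (2 * m))" by simp
  have d1: "Suc (2 * m) div 2 = m" by simp
  have d2: "Suc (Suc (2 * m)) div 2 = Suc m" by simp
  show ?case
    unfolding e sum.atLeast0_atMost_Suc Suc.IH d1 d2
    by (auto simp: var_occ_def)
qed

lemma count_D:
  assumes "k \<le> n" "i \<le> n"
  shows "(\<Sum>d\<in>{k..2*n-k}. var_occ i (Dm k d)) = cD n k i"
proof -
  have iv: "{k..2*n-k} = {0 + k..2*(n-k) + k}" using assms by simp
  have "(\<Sum>d\<in>{k..2*n-k}. var_occ i (Dm k d)) = (\<Sum>e\<in>{0..2*(n-k)}. var_occ i (Dm k (e + k)))"
    unfolding iv by (rule sum.shift_bounds_cl_nat_ivl)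
  also have "\<dots> = (\<Sum>e\<in>{0..2*(n-k)}. var_occ i (e div 2, e + k - e div 2))"
    by (rule sum.cong) (auto simp: Dm_def)
  also have "\<dots> = cD n k i"
    unfolding count_D_aux using assms by (auto simp: cD_def)
  finally show ?thesis .
qed

lemma Dm_ok:
  assumes "k \<le> n" "d \<in> {k..2*n-k}"
  shows "fst (Dm k d) \<le> snd (Dm k d) \<and> snd (Dm k d) \<le> n \<and> fst (Dm k d) + snd (Dm k d) = d"
  using assms unfolding Dm_def by auto presburger?

lemma sum_lin_int:
  "a \<le> b \<Longrightarrow> (\<Sum>j\<in>{a..<b}. (c - 2 * int j)) = int (b - a) * (c + 1 - int a - int b)"
proof (induction b)
  case 0 then show ?case by simp
next
  case (Suc b)
  show ?case
  proof (cases "a \<le> b")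
    case True
    then have "(\<Sum>j\<in>{a..<Suc b}. (c - 2 * int j)) = (\<Sum>j\<in>{a..<b}. (c - 2 * int j)) + (c - 2 * int b)"
      by simp
    also have "\<dots> = int (b - a) * (c + 1 - int a - int b) + (c - 2 * int b)" using Suc True by simp
    also have "\<dots> = int (Suc b - a) * (c + 1 - int a - int (Suc b))"
      using True by (simp add: of_nat_diff algebra_simps)
    finally show ?thesis .
  next
    case False
    then have "a = Suc b" using Suc by simp
    then show ?thesis by simp
  qed
qed

lemma H1: "(\<Sum>j<(k::nat). (if j = i then f j else 0)) = (if i < k then f i else (0::int))"
  by (simp add: sum.delta)

lemma H2: "i \<le> (k::nat) \<Longrightarrow> (\<Sum>j<k. (if k \<le> i + j then f j else 0)) = (\<Sum>j\<in>{k-i..<k}. f j :: int)"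
proof -
  assume a: "i \<le> k"
  have "(\<Sum>j<k. (if k \<le> i + j then f j else 0)) = sum f {j\<in>{..<k}. k \<le> i + j}"
    by (subst sum.inter_filter) auto
  also have "{j\<in>{..<k}. k \<le> i + j} = {k-i..<k}" using a by auto
  finally show ?thesis .
qed

lemma H3: "i \<le> (k::nat) \<Longrightarrow> (\<Sum>j<k. (if j < i then f j else 0)) = (\<Sum>j<i. f j :: int)"
proof -
  assume a: "i \<le> k"
  have "(\<Sum>j<k. (if j < i then f j else 0)) = sum f {j\<in>{..<k}. j < i}"
    by (subst sum.inter_filter) auto
  also have "{j\<in>{..<k}. j < i} = {..<i}" using a by auto
  finally show ?thesis .
qed

lemma H4: "i < (k::nat) \<Longrightarrow> (\<Sum>j<k. (if j \<le> i then f j else 0)) = (\<Sum>j<Suc i. f j :: int)"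
proof -
  assume a: "i < k"
  have "(\<Sum>j<k. (if j \<le> i then f j else 0)) = sum f {j\<in>{..<k}. j \<le> i}"
    by (subst sum.inter_filter) auto
  also have "{j\<in>{..<k}. j \<le> i} = {..<Suc i}" using a by auto
  finally show ?thesis .
qed

lemma wide_int:
  assumes km: "k \<le> m" and ii: "i \<le> k + m"
  shows "(2*int m+1) * (\<Sum>j<k. (int k + int m - 2*int j) * int (cS (k+m) k j i))
     + (int m + 1) * (int m - int k) * int (cS (k+m) k k i)
     + int m * (int m + 1) * (int m - int k) * int (cD (k+m) k i)
     = 2 * int m * (int m + 1) * (2 * int m + 1)"
proof -
  consider (A) "i < k" | (B) "k \<le> i" "i \<le> m" | (C) "m < i" by linarith
  then show ?thesis
  proof cases
    case A
    have c1: "(\<Sum>j<k. (int k + int m - 2*int j) * int (cS (k+m) k j i))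
       = (\<Sum>j<k. (if j = i then (int m + 1) * (int k + int m - 2*int j) else 0)
                 + (if k \<le> i + j then (int k + int m - 2*int j) else 0)
                 + (if j < i then (int k + int m - 2*int j) else 0))"
      by (rule sum.cong) (use A km in \<open>auto simp: cS_def algebra_simps\<close>)
    have s2: "(\<Sum>j\<in>{k-i..<k}. (int k + int m - 2*int j)) = int i * (int m + 1 + int i - int k)"
      using sum_lin_int[of "k-i" k "int k + int m"] A by (simp add: of_nat_diff algebra_simps)
    have s3: "(\<Sum>j<i. (int k + int m - 2*int j)) = int i * (int k + int m + 1 - int i)"
      using sum_lin_int[of 0 i "int k + int m"] by (simp add: atLeast0LessThan algebra_simps)
    have sum: "(\<Sum>j<k. (int k + int m - 2*int j) * int (cS (k+m) k j i))
       = (int m + 1) * (int k + int m - 2*int i) + int i * (int m + 1 + int i - int k)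
         + int i * (int k + int m + 1 - int i)"
      unfolding c1 sum.distrib H1 H2[OF less_imp_le[OF A]] H3[OF less_imp_le[OF A]] s2 s3
      using A by simp
    have cSk: "cS (k+m) k k i = 1" using A km by (auto simp: cS_def)
    have cDi: "cD (k+m) k i = 2" using A km by (auto simp: cD_def)
    show ?thesis unfolding sum cSk cDi by (simp add: algebra_simps)
  next
    case B
    have c1: "(\<Sum>j<k. (int k + int m - 2*int j) * int (cS (k+m) k j i))
       = (\<Sum>j<k. 2 * (int k + int m - 2*int j))"
      by (rule sum.cong) (use B km in \<open>auto simp: cS_def algebra_simps\<close>)
    have s: "(\<Sum>j<k. (int k + int m - 2*int j)) = int k * (int m + 1)"
      using sum_lin_int[of 0 k "int k + int m"] by (simp add: atLeast0LessThan algebra_simps)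
    have sum: "(\<Sum>j<k. (int k + int m - 2*int j) * int (cS (k+m) k j i)) = 2 * int k * (int m + 1)"
      unfolding c1 sum_distrib_left[symmetric] s by simp
    show ?thesis
    proof (cases "k = m")
      case True
      then show ?thesis unfolding sum by (simp add: algebra_simps)
    next
      case False
      then have km': "k < m" using km by simp
      consider (i1) "i = k" | (i2) "k < i" "i < m" | (i3) "i = m" using B by linarith
      then show ?thesis
      proof cases
        case i1
        have "cS (k+m) k k i = m + 2" "cD (k+m) k i = 3" using i1 km' by (auto simp: cS_def cD_def)
        then show ?thesis unfolding sum by (simp add: algebra_simps)
      next
        case i2
        have "cS (k+m) k k i = 2" "cD (k+m) k i = 4" using i2 km' by (auto simp: cS_def cD_def)
        then show ?thesis unfolding sum by (simp add: algebra_simps)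
      next
        case i3
        have "cS (k+m) k k i = m + 2" "cD (k+m) k i = 3" using i3 km' by (auto simp: cS_def cD_def)
        then show ?thesis unfolding sum by (simp add: algebra_simps)
      qed
    qed
  next
    case C
    define i' where "i' = k + m - i"
    have i'k: "i' < k" using C ii km unfolding i'_def by linarith
    have c1: "(\<Sum>j<k. (int k + int m - 2*int j) * int (cS (k+m) k j i))
       = (\<Sum>j<k. (if j \<le> i' then (int k + int m - 2*int j) else 0)
                 + (if k \<le> i' + j then (int k + int m - 2*int j) else 0)
                 + (if j = i' then int m * (int k + int m - 2*int j) else 0))"
      by (rule sum.cong) (use C km ii in \<open>auto simp: cS_def algebra_simps i'_def\<close>)
    have s1: "(\<Sum>j<Suc i'. (int k + int m - 2*int j)) = (int i' + 1) * (int k + int m - int i')"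
      using sum_lin_int[of 0 "Suc i'" "int k + int m"] by (simp add: atLeast0LessThan algebra_simps)
    have s2: "(\<Sum>j\<in>{k-i'..<k}. (int k + int m - 2*int j)) = int i' * (int m + 1 + int i' - int k)"
      using sum_lin_int[of "k-i'" k "int k + int m"] i'k by (simp add: of_nat_diff algebra_simps)
    have sum: "(\<Sum>j<k. (int k + int m - 2*int j) * int (cS (k+m) k j i))
       = (int i' + 1) * (int k + int m - int i') + int i' * (int m + 1 + int i' - int k)
         + int m * (int k + int m - 2 * int i')"
      unfolding c1 sum.distrib H4[OF i'k] H2[OF less_imp_le[OF i'k]] H1 s1 s2
      using i'k by simp
    have cSk: "cS (k+m) k k i = 1" using C km ii by (auto simp: cS_def)
    have cDi: "cD (k+m) k i = 2" using C km by (auto simp: cD_def)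
    show ?thesis unfolding sum cSk cDi by (simp add: algebra_simps)
  qed
qed

lemma total_occ_plus[simp]: "total_occ i (M + N) = total_occ i M + total_occ i N"
  by (simp add: total_occ_def)

lemma total_occ_empty[simp]: "total_occ i {#} = 0"
  by (simp add: total_occ_def)

lemma total_occ_rep[simp]: "total_occ i (replicate_mset c B) = c * (\<Sum>p\<in>B. var_occ i p)"
  by (simp add: total_occ_def)

lemma total_occ_sum: "total_occ i (\<Sum>j<k. F j) = (\<Sum>j<(k::nat). total_occ i (F j))"
  by (induction k) auto

definition Sb :: "nat \<Rightarrow> nat \<Rightarrow> nat \<Rightarrow> (nat \<times> nat) set" where
  "Sb n k j = (\<lambda>d. sort2 (Su n j d)) ` {k..2*n-k}"

definition Db :: "nat \<Rightarrow> nat \<Rightarrow> (nat \<times> nat) set" where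
  "Db n k = Dm k ` {k..2*n-k}"

lemma Su_ok:
  assumes "j \<le> k" "k \<le> n" "d \<in> {k..2*n-k}"
  shows "fst (sort2 (Su n j d)) \<le> snd (sort2 (Su n j d)) \<and> snd (sort2 (Su n j d)) \<le> n
         \<and> fst (sort2 (Su n j d)) + snd (sort2 (Su n j d)) = d"
  using assms by (auto simp: sort2_def Su_def)

lemma Sb_qmb: "j \<le> k \<Longrightarrow> k \<le> n \<Longrightarrow> quad_mon_basis n k (Sb n k j)"
  unfolding Sb_def by (rule qmb_image(1)) (rule Su_ok)

lemma Sb_occ: "j \<le> k \<Longrightarrow> k \<le> n \<Longrightarrow> (\<Sum>p\<in>Sb n k j. var_occ i p) = cS n k j i"
  unfolding Sb_def
  by (subst qmb_image(2)) (auto dest: Su_ok simp: count_S)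

lemma Db_qmb: "k \<le> n \<Longrightarrow> quad_mon_basis n k (Db n k)"
  unfolding Db_def by (rule qmb_image(1)) (rule Dm_ok)

lemma Db_occ: "k \<le> n \<Longrightarrow> i \<le> n \<Longrightarrow> (\<Sum>p\<in>Db n k. var_occ i p) = cD n k i"
  unfolding Db_def
  by (subst qmb_image(2)) (auto dest: Dm_ok simp: count_D)

definition Mw :: "nat \<Rightarrow> nat \<Rightarrow> (nat \<times> nat) set multiset" where
  "Mw n k = (\<Sum>j<k. replicate_mset ((n - 2*j) * (2*(n-k)+1)) (Sb n k j))
     + replicate_mset ((n-k+1) * ((n-k)-k)) (Sb n k k)
     + replicate_mset ((n-k) * (n-k+1) * ((n-k)-k)) (Db n k)"

lemma Mw_qmb:
  assumes "k \<le> n" "B \<in># Mw n k"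
  shows "quad_mon_basis n k B"
proof -
  have "B \<in> (\<Union>j\<in>{..<k}. set_mset (replicate_mset ((n - 2*j) * (2*(n-k)+1)) (Sb n k j)))
        \<or> B = Sb n k k \<or> B = Db n k"
    using assms(2) unfolding Mw_def by (auto simp: set_mset_sum split: if_splits)
  then show ?thesis
    using assms(1) by (auto intro: Sb_qmb Db_qmb split: if_splits)
qed

lemma Mw_occ:
  assumes "2*k \<le> n" "i \<le> n"
  shows "total_occ i (Mw n k) = 2 * (n-k) * (n-k+1) * (2*(n-k)+1)"
proof -
  define m where "m = n - k"
  have n: "n = k + m" and km: "k \<le> m" using assms unfolding m_def by auto
  have t: "total_occ i (Mw n k) = (\<Sum>j<k. (n - 2*j) * (2*m+1) * cS n k j i)
      + (m+1)*(m-k) * cS n k k i + m*(m+1)*(m-k) * cD n k i"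
    unfolding Mw_def total_occ_plus total_occ_sum total_occ_rep m_def
    using assms by (simp add: Sb_occ Db_occ)
  have "int (total_occ i (Mw n k)) = (2*int m+1) * (\<Sum>j<k. (int k + int m - 2*int j) * int (cS (k+m) k j i))
     + (int m + 1) * (int m - int k) * int (cS (k+m) k k i)
     + int m * (int m + 1) * (int m - int k) * int (cD (k+m) k i)"
  proof -
    have a: "int (\<Sum>j<k. (n - 2*j) * (2*m+1) * cS n k j i)
       = (2*int m+1) * (\<Sum>j<k. (int k + int m - 2*int j) * int (cS (k+m) k j i))"
      unfolding of_nat_sum sum_distrib_left
    proof (rule sum.cong)
      fix x assume "x \<in> {..<k}"
      then have x: "2 * x \<le> n" using n km by auto
      have e: "int (n - 2*x) = int k + int m - 2 * int x" using x n by (simp add: of_nat_diff)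
      show "int ((n - 2*x) * (2*m+1) * cS n k x i) = (2*int m+1) * ((int k + int m - 2*int x) * int (cS (k+m) k x i))"
        by (simp only: of_nat_mult e) (simp add: n algebra_simps)
    qed simp
    have b: "int ((m+1)*(m-k) * cS n k k i) = (int m + 1) * (int m - int k) * int (cS (k+m) k k i)"
      using km by (simp only: n of_nat_mult of_nat_diff[OF km] of_nat_add of_nat_1)
    have c: "int (m*(m+1)*(m-k) * cD n k i) = int m * (int m + 1) * (int m - int k) * int (cD (k+m) k i)"
      using km by (simp only: n of_nat_mult of_nat_diff[OF km] of_nat_add of_nat_1)
    show ?thesis unfolding t of_nat_add a b c ..
  qed
  also have "\<dots> = 2 * int m * (int m + 1) * (2 * int m + 1)"
    by (rule wide_int) (use km assms n in auto)
  finally have "int (total_occ i (Mw n k)) = int (2 * m * (m + 1) * (2 * m + 1))" by (simp add: algebra_simps)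
  then show ?thesis unfolding m_def by (simp only: of_nat_eq_iff)
qed

lemma Mw_nonempty:
  assumes "2*k \<le> n" "1 \<le> n"
  shows "Mw n k \<noteq> {#}"
proof
  assume "Mw n k = {#}"
  then have "total_occ 0 (Mw n k) = 0" by simp
  moreover have "total_occ 0 (Mw n k) = 2 * (n-k) * (n-k+1) * (2*(n-k)+1)" using assms by (intro Mw_occ) auto
  moreover have "n - k \<ge> 1" using assms by auto
  ultimately show False by simp
qed

lemma qmb_elem:
  assumes "quad_mon_basis N K B" "p \<in> B"
  shows "fst p \<le> snd p" "snd p \<le> N"
  using assms unfolding quad_mon_basis_def by (auto simp: case_prod_beta)

lemma qmb_map:
  assumes qb: "quad_mon_basis N0 K0 B"
    and g: "\<And>p. p \<in> B \<Longrightarrow> fst (g p) \<le> snd (g p) \<and> snd (g p) \<le> N \<and> fst (g p) + snd (g p) = c + (fst p + snd p)"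
    and K: "K = K0 + c" and K2: "2*N - K = 2*N0 - K0 + c"
  shows "quad_mon_basis N K (g ` B)" "inj_on g B"
proof -
  have bij: "bij_betw (\<lambda>(a, b). a + b) B {K0..2*N0-K0}" using qb unfolding quad_mon_basis_def by simp
  then have injs: "inj_on (\<lambda>(a, b). a + b) B" and ims: "(\<lambda>(a, b). a + b) ` B = {K0..2*N0-K0}"
    unfolding bij_betw_def by auto
  show injg: "inj_on g B"
  proof (rule inj_onI)
    fix x y assume xy: "x \<in> B" "y \<in> B" "g x = g y"
    then have "fst x + snd x = fst y + snd y" using g[of x] g[of y] by auto
    then show "x = y" using injs xy(1,2) unfolding inj_on_def by (auto simp: case_prod_beta)
  qed
  have injs2: "inj_on (\<lambda>(a, b). a + b) (g ` B)"
  proof (rule inj_onI)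
    fix x y assume "x \<in> g ` B" "y \<in> g ` B" and e: "(\<lambda>(a, b). a + b) x = (\<lambda>(a, b). a + b) y"
    then obtain px py where px: "px \<in> B" "x = g px" and py: "py \<in> B" "y = g py" by auto
    have "fst px + snd px = fst py + snd py" using e g[OF px(1)] g[OF py(1)] px(2) py(2) by (auto simp: case_prod_beta)
    then have "px = py" using injs px(1) py(1) unfolding inj_on_def by (auto simp: case_prod_beta)
    then show "x = y" using px py by simp
  qed
  have "(\<lambda>(a, b). a + b) ` g ` B = (\<lambda>s. s + c) ` ((\<lambda>(a, b). a + b) ` B)"
    unfolding image_image by (rule image_cong) (use g in \<open>auto simp: case_prod_beta\<close>)
  also have "\<dots> = {K0 + c..2*N0-K0+c}" unfolding ims by simp
  also have "\<dots> = {K..2*N-K}" using K K2 by simp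
  finally have ims2: "(\<lambda>(a, b). a + b) ` g ` B = {K..2*N-K}" .
  show "quad_mon_basis N K (g ` B)"
    unfolding quad_mon_basis_def bij_betw_def using injs2 ims2 g by (auto simp: case_prod_beta)
qed

lemma total_occ_add_mset: "total_occ i (add_mset B M) = (\<Sum>p\<in>B. var_occ i p) + total_occ i M"
  by (simp add: total_occ_def)

lemma total_occ_repeat: "total_occ i (repeat_mset c M) = c * total_occ i M"
  by (induction c) auto

lemma total_occ_image:
  assumes "\<And>B. B \<in># M \<Longrightarrow> inj_on g B"
  shows "total_occ i (image_mset ((`) g) M) = (\<Sum>B\<in>#M. \<Sum>p\<in>B. var_occ i (g p))"
  using assms
proof (induction M)
  case empty then show ?case by (simp add: total_occ_def)
next
  case (add B M)
  then show ?case by (simp add: total_occ_add_mset sum.reindex)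
qed

lemma total_occ_out:
  assumes "\<And>B. B \<in># M \<Longrightarrow> quad_mon_basis N K B" "N < i"
  shows "total_occ i M = 0"
proof -
  have "\<And>B p. B \<in># M \<Longrightarrow> p \<in> B \<Longrightarrow> var_occ i p = 0"
    using assms qmb_elem by (fastforce simp: var_occ_def)
  then show ?thesis unfolding total_occ_def by (auto intro!: sum_mset.neutral sum.neutral)
qed

lemma total_occ_pos:
  assumes "M \<noteq> {#}" "\<And>B. B \<in># M \<Longrightarrow> quad_mon_basis N K B" "K \<le> N"
    and bal: "\<And>i. i \<le> N \<Longrightarrow> total_occ i M = total_occ 0 M"
  shows "0 < total_occ 0 M"
proof -
  obtain B M' where M: "M = add_mset B M'" using assms(1) by (metis multiset_cases)
  have qb: "quad_mon_basis N K B" using assms(2) M by simp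
  then have "(\<lambda>(a, b). a + b) ` B = {K..2*N-K}" unfolding quad_mon_basis_def bij_betw_def by simp
  moreover have "K \<in> {K..2*N-K}" using assms(3) by simp
  ultimately obtain p where p: "p \<in> B" by auto
  have fin: "finite B"
  proof -
    have "bij_betw (\<lambda>(a, b). a + b) B {K..2*N-K}" using qb unfolding quad_mon_basis_def by simp
    then show ?thesis using bij_betw_finite by blast
  qed
  have "1 \<le> var_occ (fst p) p" by (simp add: var_occ_def)
  also have "\<dots> \<le> (\<Sum>q\<in>B. var_occ (fst p) q)" using fin p by (simp add: sum.remove)
  also have "\<dots> \<le> total_occ (fst p) M" unfolding M total_occ_add_mset by simp
  also have "\<dots> = total_occ 0 M" by (rule bal) (use qmb_elem[OF qb p] in simp)
  finally show ?thesis by simp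
qed

lemma var_occ_shift1: "var_occ i (a, c + b) + var_occ i (b, c + a) = var_occ i (a, b) + (if c \<le> i then var_occ (i - c) (a, b) else 0)"
  by (auto simp: var_occ_def)

lemma var_occ_swap: "var_occ i (a, b) = var_occ i (b, a)"
  by (simp add: var_occ_def)
lemma var_occ_shift2: "var_occ i (sort2 (c + a, b)) + var_occ i (sort2 (c + b, a)) = var_occ i (a, b) + (if c \<le> i then var_occ (i - c) (a, b) else 0)"
proof -
  have "var_occ i (sort2 (c + a, b)) + var_occ i (sort2 (c + b, a)) = var_occ i (b, c + a) + var_occ i (a, c + b)"
    using var_occ_swap[of i "c + a" b] var_occ_swap[of i "c + b" a] by simp
  also have "\<dots> = var_occ i (b, a) + (if c \<le> i then var_occ (i - c) (b, a) else 0)"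
    by (rule var_occ_shift1)
  also have "\<dots> = var_occ i (a, b) + (if c \<le> i then var_occ (i - c) (a, b) else 0)"
    using var_occ_swap[of i b a] var_occ_swap[of "i - c" b a] by simp
  finally show ?thesis .
qed


lemma total_occ_pair_images:
  assumes "\<And>B. B \<in># M \<Longrightarrow> inj_on g1 B \<and> inj_on g2 B"
    and "\<And>p. var_occ i (g1 p) + var_occ i (g2 p) = var_occ i p + (if c \<le> i then var_occ (i - c) p else 0)"
  shows "total_occ i (image_mset ((`) g1) M + image_mset ((`) g2) M) = total_occ i M + (if c \<le> i then total_occ (i - c) M else 0)"
  using assms(1)
proof (induction M)
  case empty then show ?case by simp
next
  case (add B M)
  have inj: "inj_on g1 B" "inj_on g2 B" using add.prems by auto
  have IH: "total_occ i (image_mset ((`) g1) M + image_mset ((`) g2) M) = total_occ i M + (if c \<le> i then total_occ (i - c) M else 0)"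
    using add by auto
  have "(\<Sum>p\<in>g1 ` B. var_occ i p) + (\<Sum>p\<in>g2 ` B. var_occ i p) = (\<Sum>p\<in>B. var_occ i (g1 p) + var_occ i (g2 p))"
    using inj by (simp add: sum.reindex sum.distrib)
  also have "\<dots> = (\<Sum>p\<in>B. var_occ i p) + (if c \<le> i then (\<Sum>p\<in>B. var_occ (i - c) p) else 0)"
    unfolding assms(2) by (simp add: sum.distrib)
  finally have e: "(\<Sum>p\<in>g1 ` B. var_occ i p) + (\<Sum>p\<in>g2 ` B. var_occ i p) = (\<Sum>p\<in>B. var_occ i p) + (if c \<le> i then (\<Sum>p\<in>B. var_occ (i - c) p) else 0)" .
  have "total_occ i (image_mset ((`) g1) (add_mset B M) + image_mset ((`) g2) (add_mset B M))
      = ((\<Sum>p\<in>g1 ` B. var_occ i p) + (\<Sum>p\<in>g2 ` B. var_occ i p)) + total_occ i (image_mset ((`) g1) M + image_mset ((`) g2) M)"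
    by (simp add: total_occ_add_mset)
  also have "\<dots> = total_occ i (add_mset B M) + (if c \<le> i then total_occ (i - c) (add_mset B M) else 0)"
    unfolding e IH by (simp add: total_occ_add_mset)
  finally show ?case .
qed

lemma mem_repeat_iff: "x \<in># repeat_mset c M \<longleftrightarrow> 0 < c \<and> x \<in># M"
  by (simp only: count_greater_zero_iff[symmetric] count_repeat_mset) simp

lemma narrow:
  assumes kn: "k \<le> n" and mk: "n - k < k"
    and M1: "M1 \<noteq> {#}" "\<And>B. B \<in># M1 \<Longrightarrow> quad_mon_basis (n-k) 0 B"
       "\<And>i. i \<le> n-k \<Longrightarrow> total_occ i M1 = total_occ 0 M1"
    and M2: "M2 \<noteq> {#}" "\<And>B. B \<in># M2 \<Longrightarrow> quad_mon_basis (k-1) (k-1-(n-k)) B"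
       "\<And>i. i \<le> k-1 \<Longrightarrow> total_occ i M2 = total_occ 0 M2"
  shows "\<exists>M. M \<noteq> {#} \<and> (\<forall>B\<in>#M. quad_mon_basis n k B) \<and> (\<forall>i\<le>n. total_occ i M = total_occ 0 M)"
proof -
  define m where "m = n - k"
  have n: "n = k + m" and mk': "m < k" using kn mk unfolding m_def by auto
  define t1 where "t1 = total_occ 0 M1"
  define t2 where "t2 = total_occ 0 M2"
  define F1 where "F1 = (\<lambda>p::nat\<times>nat. (fst p, k + snd p))"
  define G1 where "G1 = (\<lambda>p::nat\<times>nat. (snd p, k + fst p))"
  define F2 where "F2 = (\<lambda>p::nat\<times>nat. sort2 (m + 1 + fst p, snd p))"
  define G2 where "G2 = (\<lambda>p::nat\<times>nat. sort2 (m + 1 + snd p, fst p))"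
  define M where "M = repeat_mset t2 (image_mset ((`) F1) M1 + image_mset ((`) G1) M1)
     + repeat_mset t1 (image_mset ((`) F2) M2 + image_mset ((`) G2) M2)"
  have q1: "quad_mon_basis n k (F1 ` B) \<and> inj_on F1 B" "quad_mon_basis n k (G1 ` B) \<and> inj_on G1 B"
    if B: "B \<in># M1" for B
  proof -
    have qb: "quad_mon_basis m 0 B" using M1(2)[OF B] unfolding m_def .
    have el: "fst p \<le> snd p" "snd p \<le> m" if "p \<in> B" for p using qmb_elem[OF qb that] by auto
    have K: "k = 0 + k" and K2: "2*n - k = 2*m - 0 + k" using n by auto
    have c1: "fst (F1 p) \<le> snd (F1 p) \<and> snd (F1 p) \<le> n \<and> fst (F1 p) + snd (F1 p) = k + (fst p + snd p)"
      if "p \<in> B" for p using el[OF that] n by (auto simp: F1_def)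
    have d1: "fst (G1 p) \<le> snd (G1 p) \<and> snd (G1 p) \<le> n \<and> fst (G1 p) + snd (G1 p) = k + (fst p + snd p)"
      if "p \<in> B" for p using el[OF that] n mk' by (auto simp: G1_def)
    show "quad_mon_basis n k (F1 ` B) \<and> inj_on F1 B"
      using qmb_map[OF qb c1 K K2] by simp
    show "quad_mon_basis n k (G1 ` B) \<and> inj_on G1 B"
      using qmb_map[OF qb d1 K K2] by simp
  qed
  have q2: "quad_mon_basis n k (F2 ` B) \<and> inj_on F2 B" "quad_mon_basis n k (G2 ` B) \<and> inj_on G2 B"
    if B: "B \<in># M2" for B
  proof -
    have qb: "quad_mon_basis (k-1) (k-1-m) B" using M2(2)[OF B] unfolding m_def .
    have el: "fst p \<le> snd p" "snd p \<le> k-1" if "p \<in> B" for p using qmb_elem[OF qb that] by auto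
    have K: "k = (k-1-m) + (m+1)" and K2: "2*n - k = 2*(k-1) - (k-1-m) + (m+1)" using n mk' by auto
    have c2: "fst (F2 p) \<le> snd (F2 p) \<and> snd (F2 p) \<le> n \<and> fst (F2 p) + snd (F2 p) = (m+1) + (fst p + snd p)"
      if "p \<in> B" for p using el[OF that] n mk' by (auto simp: F2_def sort2_def)
    have d2: "fst (G2 p) \<le> snd (G2 p) \<and> snd (G2 p) \<le> n \<and> fst (G2 p) + snd (G2 p) = (m+1) + (fst p + snd p)"
      if "p \<in> B" for p using el[OF that] n mk' by (auto simp: G2_def sort2_def)
    show "quad_mon_basis n k (F2 ` B) \<and> inj_on F2 B"
      using qmb_map[OF qb c2 K K2] by simp
    show "quad_mon_basis n k (G2 ` B) \<and> inj_on G2 B"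
      using qmb_map[OF qb d2 K K2] by simp
  qed
  have T1: "total_occ j M1 = (if j \<le> m then t1 else 0)" for j
    using M1(3)[of j] total_occ_out[where i=j, OF M1(2)] unfolding t1_def m_def by auto
  have T2: "total_occ j M2 = (if j \<le> k-1 then t2 else 0)" for j
    using M2(3)[of j] total_occ_out[where i=j, OF M2(2)] unfolding t2_def by auto
  have tot: "total_occ i M = 2 * t1 * t2" if i: "i \<le> n" for i
  proof -
    have a: "total_occ i (image_mset ((`) F1) M1 + image_mset ((`) G1) M1) = total_occ i M1 + (if k \<le> i then total_occ (i - k) M1 else 0)"
      by (rule total_occ_pair_images) (use q1 in \<open>auto simp: F1_def G1_def var_occ_shift1[of i "fst _" k "snd _", simplified]\<close>)
    have b: "total_occ i (image_mset ((`) F2) M2 + image_mset ((`) G2) M2) = total_occ i M2 + (if m+1 \<le> i then total_occ (i - (m+1)) M2 else 0)"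
      by (rule total_occ_pair_images) (use q2 in \<open>auto simp: F2_def G2_def var_occ_shift2[of i "m+1" "fst _" "snd _", simplified]\<close>)
    show ?thesis unfolding M_def total_occ_plus total_occ_repeat a[unfolded total_occ_plus] b[unfolded total_occ_plus] T1 T2
      using i n mk' by auto
  qed
  have t1pos: "0 < t1" unfolding t1_def by (rule total_occ_pos[OF M1(1) M1(2) _ M1(3)]) simp_all
  have t2pos: "0 < t2" unfolding t2_def by (rule total_occ_pos[OF M2(1) M2(2) _ M2(3)]) simp_all
  obtain B0 where B0: "B0 \<in># M1" using M1(1) by (metis multiset_nonemptyE)
  have "F1 ` B0 \<in># M" unfolding M_def using B0 t2pos by (simp add: mem_repeat_iff)
  then have ne: "M \<noteq> {#}" by auto
  have qmb: "\<forall>B\<in>#M. quad_mon_basis n k B"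
    unfolding M_def using q1 q2 t1pos t2pos by (auto simp: mem_repeat_iff)
  have bal: "\<forall>i\<le>n. total_occ i M = total_occ 0 M"
  proof (intro allI impI)
    fix i assume "i \<le> n"
    then show "total_occ i M = total_occ 0 M" using tot[of i] tot[of 0] by simp
  qed
  show ?thesis using ne qmb bal by blast
qed

lemma base0: "quad_mon_basis 0 0 {(0,0)}"
  unfolding quad_mon_basis_def bij_betw_def by auto

lemma main:
  "k \<le> n \<Longrightarrow> \<exists>M. M \<noteq> {#} \<and> (\<forall>B\<in>#M. quad_mon_basis n k B) \<and> (\<forall>i\<le>n. total_occ i M = total_occ 0 M)"
proof (induction n arbitrary: k rule: less_induct)
  case (less n)
  show ?case
  proof (cases "n = 0")
    case True
    then have k: "k = 0" using less.prems by simp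
    show ?thesis
      by (rule exI[of _ "{#{(0,0)}#}"]) (use True k base0 in auto)
  next
    case False
    then have n1: "1 \<le> n" by simp
    show ?thesis
    proof (cases "2*k \<le> n")
      case True
      have "Mw n k \<noteq> {#}" using Mw_nonempty[OF True n1] .
      moreover have "\<forall>B\<in>#Mw n k. quad_mon_basis n k B" using Mw_qmb less.prems by blast
      moreover have "\<forall>i\<le>n. total_occ i (Mw n k) = total_occ 0 (Mw n k)"
        using Mw_occ[OF True] by simp
      ultimately show ?thesis by blast
    next
      case False
      have kn: "k \<le> n" using less.prems .
      have mk: "n - k < k" using False by simp
      have k1: "1 \<le> k" using mk by simp
      have a1: "n - k < n" using k1 kn by simp
      have a2: "(0::nat) \<le> n - k" by simp
      obtain M1 where M1: "M1 \<noteq> {#}" "\<forall>B\<in>#M1. quad_mon_basis (n-k) 0 B"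
          "\<forall>i\<le>n-k. total_occ i M1 = total_occ 0 M1"
        using less.IH[OF a1 a2] by blast
      have b1: "k - 1 < n" using k1 kn by simp
      have b2: "k - 1 - (n - k) \<le> k - 1" by simp
      obtain M2 where M2: "M2 \<noteq> {#}" "\<forall>B\<in>#M2. quad_mon_basis (k-1) (k-1-(n-k)) B"
          "\<forall>i\<le>k-1. total_occ i M2 = total_occ 0 M2"
        using less.IH[OF b1 b2] by blast
      show ?thesis
        by (rule narrow[OF kn mk M1(1) _ _ M2(1)]) (use M1(2,3) M2(2,3) in blast)+
    qed
  qed
qed

theorem proposition6p7:
  fixes n k :: nat
  assumes "n \<ge> 1" and "k \<le> n"
  shows "\<exists>M :: (nat \<times> nat) set multiset.
           M \<noteq> {#} \<and> (\<forall>B \<in># M. quad_mon_basis n k B) \<and> X_balanced n M"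
proof -
  obtain M where M: "M \<noteq> {#}" "\<forall>B\<in>#M. quad_mon_basis n k B" "\<forall>i\<le>n. total_occ i M = total_occ 0 M"
    using main[OF assms(2)] by blast
  have "X_balanced n M" unfolding X_balanced_def using M(3) by metis
  then show ?thesis using M by blast
qed

end
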